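(* Let $\Lambda$ be a weight function with polynomial growth and $\rho\in(0,\tfrac1\mu]$. Let $\sigma\in M^0_{\rho,\Lambda}$ and let $F$ be a $C^\infty$ function on the complex plane $\mathbb{C}$ (viewed as $\mathbb{R}^2$). Then $F\circ\sigma\in M^0_{\rho,\Lambda}$.
   Context: A positive function $\Lambda\in C^\infty(\mathbb{R}^n)$ is a weight function with polynomial growth if there are constants $0<\mu_0\le\mu_1$, $0<C_0\le C_1$ with $C_0(1+|\xi|)^{\mu_0}\le\Lambda(\xi)\le C_1(1+|\xi|)^{\mu_1}$ for all $\xi$, and there is a real $\mu\ge\mu_1$ such that for all multi-indices $\alpha,\gamma$ with $\gamma_j\in\{0,1\}$ there is $C_{\alpha,\gamma}>0$ with $|\xi^\gamma(\partial^{\alpha+\gamma}\Lambda)(\xi)|\le C_{\alpha,\gamma}\Lambda(\xi)^{1-|\alpha|/\mu}$. For $m\in\mathbb{R}$ and $\rho\in(0,1/\mu]$, $S^m_{\rho,\Lambda}$ is the set of $\sigma\in C^\infty(\mathbb{R}^n\times\mathbb{R}^n)$ such that for all multi-indices $\alpha,\beta$ there is $C_{\alpha,\beta}>0$ with $|\partial_x^\alpha\partial_\xi^\beta\sigma(x,\xi)|\le C_{\alpha,\beta}\Lambda(\xi)^{m-\rho|\beta|}$; $M^m_{\rho,\Lambda}$ is the set of $\sigma$ such that $\xi^\gamma\partial_\xi^\gamma\sigma\in S^m_{\rho,\Lambda}$ for every multi-index $\gamma$ with all $\gamma_j\in\{0,1\}$. *)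

theory Defs
  imports "HOL-Analysis.Analysis"
begin

definition dd :: "'a::real_normed_vector \<Rightarrow> ('a \<Rightarrow> 'b::real_normed_vector) \<Rightarrow> 'a \<Rightarrow> 'b" where
  "dd v f z = vector_derivative (\<lambda>t. f (z + t *\<^sub>R v)) (at 0)"

fun iter_dd :: "'a::real_normed_vector list \<Rightarrow> ('a \<Rightarrow> 'b::real_normed_vector) \<Rightarrow> 'a \<Rightarrow> 'b" where
  "iter_dd [] f = f"
| "iter_dd (v # vs) f = dd v (iter_dd vs f)"

definition smooth :: "('a::euclidean_space \<Rightarrow> 'b::real_normed_vector) \<Rightarrow> bool" where
  "smooth f \<longleftrightarrow> (\<forall>vs \<in> lists Basis.
      continuous_on UNIV (iter_dd vs f) \<and>
      (\<forall>v \<in> Basis. \<forall>z. (\<lambda>t. iter_dd vs f (z + t *\<^sub>R v)) differentiable (at 0)))"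

definition idx_enum :: "'n::finite list" where
  "idx_enum = (SOME xs. distinct xs \<and> set xs = UNIV)"

definition mabs :: "('n::finite \<Rightarrow> nat) \<Rightarrow> nat" where
  "mabs \<alpha> = (\<Sum>j\<in>UNIV. \<alpha> j)"

definition mpow :: "real^'n::finite \<Rightarrow> ('n \<Rightarrow> nat) \<Rightarrow> real" where
  "mpow \<xi> \<gamma> = (\<Prod>j\<in>UNIV. (\<xi> $ j) ^ \<gamma> j)"

definition mdirs :: "('n::finite \<Rightarrow> 'a) \<Rightarrow> ('n \<Rightarrow> nat) \<Rightarrow> 'a list" where
  "mdirs e \<alpha> = concat (map (\<lambda>i. replicate (\<alpha> i) (e i)) idx_enum)"

definition Dm :: "('n::finite \<Rightarrow> nat) \<Rightarrow> (real^'n \<Rightarrow> 'b::real_normed_vector) \<Rightarrow> real^'n \<Rightarrow> 'b" where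
  "Dm \<alpha> f = iter_dd (mdirs (\<lambda>i. axis i 1) \<alpha>) f"

definition Dxxi :: "('n::finite \<Rightarrow> nat) \<Rightarrow> ('n \<Rightarrow> nat) \<Rightarrow>
    ((real^'n) \<times> (real^'n) \<Rightarrow> 'b::real_normed_vector) \<Rightarrow> (real^'n) \<times> (real^'n) \<Rightarrow> 'b" where
  "Dxxi \<alpha> \<beta> f = iter_dd (mdirs (\<lambda>i. (axis i 1, 0)) \<alpha> @ mdirs (\<lambda>i. (0, axis i 1)) \<beta>) f"

definition weight_fn :: "(real^'n::finite \<Rightarrow> real) \<Rightarrow> real \<Rightarrow> bool" where
  "weight_fn \<Lambda> \<mu> \<longleftrightarrow> smooth \<Lambda> \<and> (\<forall>\<xi>. \<Lambda> \<xi> > 0) \<and>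
    (\<exists>\<mu>0 \<mu>1 C0 C1. 0 < \<mu>0 \<and> \<mu>0 \<le> \<mu>1 \<and> 0 < C0 \<and> C0 \<le> C1 \<and> \<mu>1 \<le> \<mu> \<and>
       (\<forall>\<xi>. C0 * (1 + norm \<xi>) powr \<mu>0 \<le> \<Lambda> \<xi> \<and> \<Lambda> \<xi> \<le> C1 * (1 + norm \<xi>) powr \<mu>1)) \<and>
    (\<forall>\<alpha> \<gamma>. (\<forall>j. \<gamma> j \<le> 1) \<longrightarrow>
       (\<exists>C>0. \<forall>\<xi>. \<bar>mpow \<xi> \<gamma> * Dm (\<lambda>j. \<alpha> j + \<gamma> j) \<Lambda> \<xi>\<bar>
                   \<le> C * \<Lambda> \<xi> powr (1 - real (mabs \<alpha>) / \<mu>)))"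

definition S_class :: "real \<Rightarrow> real \<Rightarrow> (real^'n::finite \<Rightarrow> real) \<Rightarrow>
    ((real^'n) \<times> (real^'n) \<Rightarrow> complex) set" where
  "S_class m \<rho> \<Lambda> = {\<sigma>. smooth \<sigma> \<and>
     (\<forall>\<alpha> \<beta>. \<exists>C>0. \<forall>x \<xi>. norm (Dxxi \<alpha> \<beta> \<sigma> (x, \<xi>)) \<le> C * \<Lambda> \<xi> powr (m - \<rho> * real (mabs \<beta>)))}"

definition M_class :: "real \<Rightarrow> real \<Rightarrow> (real^'n::finite \<Rightarrow> real) \<Rightarrow>
    ((real^'n) \<times> (real^'n) \<Rightarrow> complex) set" where
  "M_class m \<rho> \<Lambda> = {\<sigma>. \<forall>\<gamma>. (\<forall>j. \<gamma> j \<le> 1) \<longrightarrow>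
     (\<lambda>(x, \<xi>). complex_of_real (mpow \<xi> \<gamma>) * Dxxi (\<lambda>_. 0) \<gamma> \<sigma> (x, \<xi>)) \<in> S_class m \<rho> \<Lambda>}"

end

theory Submission
  imports Defs "HOL-Library.Sublist"
begin

definition ldiff :: "'a::real_normed_vector \<Rightarrow> ('a \<Rightarrow> 'b::real_normed_vector) \<Rightarrow> bool" where
  "ldiff v f \<longleftrightarrow> (\<forall>z. (\<lambda>t. f (z + t *\<^sub>R v)) differentiable (at 0))"

lemma dd_has: "ldiff v f \<Longrightarrow> ((\<lambda>t. f (z + t *\<^sub>R v)) has_vector_derivative dd v f z) (at 0)"
  unfolding ldiff_def dd_def using vector_derivative_works by blast

lemma ldiffI: "(\<And>z. ((\<lambda>t. f (z + t *\<^sub>R v)) has_vector_derivative D z) (at 0)) \<Longrightarrow> ldiff v f"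
  unfolding ldiff_def using differentiableI_vector by blast

lemma ddI: "((\<lambda>t. f (z + t *\<^sub>R v)) has_vector_derivative D) (at 0) \<Longrightarrow> dd v f z = D"
  unfolding dd_def by (rule vector_derivative_at)

lemma dd_add:
  assumes "ldiff v f" "ldiff v g"
  shows "dd v (\<lambda>z. f z + g z) z = dd v f z + dd v g z"
  by (rule ddI, rule has_vector_derivative_add, rule dd_has[OF assms(1)], rule dd_has[OF assms(2)])

lemma ldiff_add:
  assumes "ldiff v f" "ldiff v g"
  shows "ldiff v (\<lambda>z. f z + g z)"
  by (rule ldiffI, rule has_vector_derivative_add, rule dd_has[OF assms(1)], rule dd_has[OF assms(2)])

lemma dd_mult:
  fixes f g :: "'a::real_normed_vector \<Rightarrow> 'b::real_normed_algebra"
  assumes "ldiff v f" "ldiff v g"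
  shows "dd v (\<lambda>z. f z * g z) z = f z * dd v g z + dd v f z * g z"
  using has_vector_derivative_mult[OF dd_has[OF assms(1)] dd_has[OF assms(2)], of z]
  by (intro ddI) simp

lemma ldiff_mult:
  fixes f g :: "'a::real_normed_vector \<Rightarrow> 'b::real_normed_algebra"
  assumes "ldiff v f" "ldiff v g"
  shows "ldiff v (\<lambda>z. f z * g z)"
  by (rule ldiffI, rule has_vector_derivative_mult, rule dd_has[OF assms(1)], rule dd_has[OF assms(2)])

lemma dd_lin:
  assumes "bounded_linear L" "ldiff v f"
  shows "dd v (\<lambda>z. L (f z)) z = L (dd v f z)"
  by (rule ddI, rule bounded_linear.has_vector_derivative[OF assms(1)], rule dd_has[OF assms(2)])

lemma ldiff_lin:
  assumes "bounded_linear L" "ldiff v f"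
  shows "ldiff v (\<lambda>z. L (f z))"
  by (rule ldiffI, rule bounded_linear.has_vector_derivative[OF assms(1)], rule dd_has[OF assms(2)])

lemma iter_dd_snoc: "iter_dd (vs @ [v]) f = iter_dd vs (dd v f)"
  by (induction vs) auto

lemma smooth_cont: "smooth f \<Longrightarrow> continuous_on UNIV f"
  unfolding smooth_def by (metis iter_dd.simps(1) lists.Nil)

lemma smooth_ldiff: "smooth f \<Longrightarrow> b \<in> Basis \<Longrightarrow> ldiff b f"
  unfolding smooth_def ldiff_def by (metis iter_dd.simps(1) lists.Nil)

lemma smooth_dd:
  fixes f :: "'a::euclidean_space \<Rightarrow> 'b::real_normed_vector"
  assumes sm: "smooth f" and b: "b \<in> Basis" shows "smooth (dd b f)"
  unfolding smooth_def
proof (intro ballI)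
  fix vs :: "'a list" assume "vs \<in> lists Basis"
  then have "vs @ [b] \<in> lists Basis" using b by simp
  with sm show "continuous_on UNIV (iter_dd vs (dd b f)) \<and>
         (\<forall>v\<in>Basis. \<forall>z. (\<lambda>t. iter_dd vs (dd b f) (z + t *\<^sub>R v)) differentiable at 0)"
    unfolding smooth_def iter_dd_snoc[symmetric] by blast
qed

lemma F_deriv:
  fixes F :: "complex \<Rightarrow> complex" assumes sm: "smooth F"
  shows "(F has_derivative (\<lambda>h. Re h *\<^sub>R dd 1 F w + Im h *\<^sub>R dd \<i> F w)) (at w)"
proof -
  have B: "1 \<in> (Basis::complex set)" "\<i> \<in> (Basis::complex set)" by (simp_all add: Basis_complex_def)
  define f where "f x y = F (Complex x y)" for x y
  have fx: "((\<lambda>x. f x y) has_derivative (\<lambda>tx. tx *\<^sub>R dd 1 F (Complex x y))) (at x within UNIV)" for x y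
  proof -
    have 1: "((\<lambda>t. F (Complex x y + t *\<^sub>R 1)) has_vector_derivative dd 1 F (Complex x y)) (at 0)"
      using dd_has[OF smooth_ldiff[OF sm B(1)]] .
    have 2: "((\<lambda>t. t - x) has_vector_derivative 1) (at x)"
      by (auto intro!: derivative_eq_intros)
    have "((\<lambda>t. F (Complex x y + t *\<^sub>R 1)) \<circ> (\<lambda>t. t - x) has_vector_derivative 1 *\<^sub>R dd 1 F (Complex x y)) (at x)"
      using vector_diff_chain_at[OF 2] 1 by simp
    moreover have "(\<lambda>t. F (Complex x y + t *\<^sub>R 1)) \<circ> (\<lambda>t. t - x) = (\<lambda>x. f x y)"
      by (rule ext) (simp add: f_def, rule arg_cong[where f=F], simp add: complex_eq_iff)
    ultimately show ?thesis by (simp add: has_vector_derivative_def)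
  qed
  have fy: "((\<lambda>y. f x y) has_derivative blinfun_apply (blinfun_scaleR_left (dd \<i> F (Complex x y)))) (at y within UNIV)" for x y
  proof -
    have 1: "((\<lambda>t. F (Complex x y + t *\<^sub>R \<i>)) has_vector_derivative dd \<i> F (Complex x y)) (at 0)"
      using dd_has[OF smooth_ldiff[OF sm B(2)]] .
    have 2: "((\<lambda>t. t - y) has_vector_derivative 1) (at y)"
      by (auto intro!: derivative_eq_intros)
    have "((\<lambda>t. F (Complex x y + t *\<^sub>R \<i>)) \<circ> (\<lambda>t. t - y) has_vector_derivative 1 *\<^sub>R dd \<i> F (Complex x y)) (at y)"
      using vector_diff_chain_at[OF 2] 1 by simp
    moreover have "(\<lambda>t. F (Complex x y + t *\<^sub>R \<i>)) \<circ> (\<lambda>t. t - y) = (\<lambda>y. f x y)"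
      by (rule ext) (simp add: f_def, rule arg_cong[where f=F], simp add: complex_eq_iff)
    ultimately show ?thesis by (simp add: has_vector_derivative_def)
  qed
  have cF2: "continuous_on UNIV (dd \<i> F)"
    using smooth_cont[OF smooth_dd[OF sm B(2)]] .
  have cC: "continuous_on UNIV (\<lambda>p::real\<times>real. Complex (fst p) (snd p))"
    unfolding Complex_eq by (intro continuous_intros)
  have "continuous_on UNIV (\<lambda>p::real\<times>real. blinfun_scaleR_left (dd \<i> F (Complex (fst p) (snd p))))"
    by (rule continuous_on_compose2[OF bounded_linear.continuous_on[OF bounded_linear_blinfun_scaleR_left continuous_on_id]
          continuous_on_compose2[OF cF2 cC]]) auto
  then have cont: "continuous (at (x, y) within UNIV \<times> UNIV) (\<lambda>(x, y). blinfun_scaleR_left (dd \<i> F (Complex x y)))" for x y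
    by (simp add: continuous_on_eq_continuous_at split_def)
  have P: "((\<lambda>(x, y). f x y) has_derivative (\<lambda>(tx, ty). tx *\<^sub>R dd 1 F (Complex x y) + ty *\<^sub>R dd \<i> F (Complex x y))) (at (x, y))" for x y
    using has_derivative_partialsI[OF fx fy cont] by simp
  have L: "((\<lambda>w. (Re w, Im w)) has_derivative (\<lambda>w. (Re w, Im w))) (at w)"
    by (intro bounded_linear_imp_has_derivative bounded_linear_Pair bounded_linear_Re bounded_linear_Im)
  from has_derivative_compose[OF L P[of "Re w" "Im w"]]
  show ?thesis by (simp add: f_def)
qed

definition okd :: "'a::euclidean_space list \<Rightarrow> ('a \<Rightarrow> 'b::real_normed_vector) \<Rightarrow> bool" where
  "okd vs f \<longleftrightarrow> set vs \<subseteq> Basis \<and> continuous_on UNIV (iter_dd vs f) \<and> (\<forall>b\<in>Basis. ldiff b (iter_dd vs f))"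

definition bnd :: "('a::real_normed_vector \<Rightarrow> real) \<Rightarrow> ('a \<Rightarrow> real) \<Rightarrow> real \<Rightarrow> 'a list \<Rightarrow> ('a \<Rightarrow> 'b::real_normed_vector) \<Rightarrow> bool" where
  "bnd W c m vs f \<longleftrightarrow> (\<exists>C. \<forall>z. norm (iter_dd vs f z) \<le> C * W z powr (m - sum_list (map c vs)))"

definition Gd :: "('a::euclidean_space \<Rightarrow> real) \<Rightarrow> ('a \<Rightarrow> real) \<Rightarrow> bool \<Rightarrow> real \<Rightarrow> 'a list \<Rightarrow> ('a \<Rightarrow> 'b::real_normed_vector) \<Rightarrow> bool" where
  "Gd W c B m vs f \<longleftrightarrow> okd vs f \<and> (B \<longrightarrow> bnd W c m vs f)"

definition Gall :: "('a::euclidean_space \<Rightarrow> real) \<Rightarrow> ('a \<Rightarrow> real) \<Rightarrow> bool \<Rightarrow> real \<Rightarrow> 'a list \<Rightarrow> ('a \<Rightarrow> 'b::real_normed_vector) \<Rightarrow> bool" where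
  "Gall W c B m vs f \<longleftrightarrow> (\<forall>us. subseq us vs \<longrightarrow> Gd W c B m us f)"

lemma Gall_sub: "Gall W c B m vs f \<Longrightarrow> subseq us vs \<Longrightarrow> Gall W c B m us f"
  unfolding Gall_def using subseq_order.order_trans by blast

lemma Gall_Gd: "Gall W c B m vs f \<Longrightarrow> Gd W c B m vs f"
  unfolding Gall_def by simp

lemma Gall_ldiff: "Gall W c B m vs f \<Longrightarrow> b \<in> Basis \<Longrightarrow> ldiff b f"
  unfolding Gall_def Gd_def okd_def by (metis iter_dd.simps(1) list_emb_Nil)

lemma Gall_basis: "Gall W c B m vs f \<Longrightarrow> set vs \<subseteq> Basis"
  unfolding Gall_def Gd_def okd_def by simp

lemma Gall_snoc_dd: "Gall W c B m (vs @ [v]) f \<Longrightarrow> Gall W c B (m - c v) vs (dd v f)"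
proof (unfold Gall_def, intro allI impI)
  fix us assume A: "\<forall>us. subseq us (vs@[v]) \<longrightarrow> Gd W c B m us f" and "subseq us vs"
  then have "Gd W c B m (us@[v]) f" by simp
  moreover have "m - c v - sum_list (map c us) = m - sum_list (map c (us @ [v]))" by simp
  ultimately show "Gd W c B (m - c v) us (dd v f)"
    unfolding Gd_def okd_def bnd_def iter_dd_snoc by (force simp: algebra_simps)
qed

lemma Gd_snoc_back:
  assumes "Gd W c B (m - c v) ws H" "iter_dd ws H = iter_dd (ws@[v]) f" "v \<in> Basis"
  shows "Gd W c B m (ws@[v]) f"
proof -
  have "m - c v - sum_list (map c ws) = m - sum_list (map c (ws @ [v]))" by simp
  with assms show ?thesis unfolding Gd_def okd_def bnd_def by auto
qed

lemma iter_dd_add: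
  assumes "Gall W c B m vs f" "Gall W c B' m' vs g"
  shows "iter_dd vs (\<lambda>z. f z + g z) = (\<lambda>z. iter_dd vs f z + iter_dd vs g z)"
  using assms
proof (induction vs)
  case Nil thus ?case by simp
next
  case (Cons v vs)
  have "subseq vs (v#vs)" by (metis list_emb_Cons subseq_order.order_refl)
  then have G: "Gall W c B m vs f" "Gall W c B' m' vs g" using Cons.prems Gall_sub by blast+
  have v: "v \<in> Basis" using Gall_basis[OF Cons.prems(1)] by simp
  have l: "ldiff v (iter_dd vs f)" "ldiff v (iter_dd vs g)"
    using Gall_Gd[OF G(1)] Gall_Gd[OF G(2)] v unfolding Gd_def okd_def by auto
  show ?case by (simp add: Cons.IH[OF G] dd_add[OF l])
qed

lemma Gd_add:
  assumes "Gall W c B m vs f" "Gall W c B m vs g"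
  shows "Gd W c B m vs (\<lambda>z. f z + g z)"
proof -
  have f: "Gd W c B m vs f" and g: "Gd W c B m vs g" using assms Gall_Gd by blast+
  show ?thesis
    unfolding Gd_def okd_def bnd_def iter_dd_add[OF assms]
  proof (intro conjI impI)
    show "set vs \<subseteq> Basis" using f unfolding Gd_def okd_def by simp
    show "continuous_on UNIV (\<lambda>z. iter_dd vs f z + iter_dd vs g z)"
      using f g unfolding Gd_def okd_def by (auto intro: continuous_on_add)
    show "\<forall>b\<in>Basis. ldiff b (\<lambda>z. iter_dd vs f z + iter_dd vs g z)"
      using f g unfolding Gd_def okd_def by (auto intro: ldiff_add)
  next
    assume B
    then obtain C1 C2 where C1: "\<And>z. norm (iter_dd vs f z) \<le> C1 * W z powr (m - sum_list (map c vs))"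
      and C2: "\<And>z. norm (iter_dd vs g z) \<le> C2 * W z powr (m - sum_list (map c vs))"
      using f g unfolding Gd_def bnd_def by blast
    show "\<exists>C. \<forall>z. norm (iter_dd vs f z + iter_dd vs g z) \<le> C * W z powr (m - sum_list (map c vs))"
    proof (intro exI allI)
      fix z
      have "norm (iter_dd vs f z + iter_dd vs g z) \<le> norm (iter_dd vs f z) + norm (iter_dd vs g z)"
        by (rule norm_triangle_ineq)
      also have "\<dots> \<le> (C1 + C2) * W z powr (m - sum_list (map c vs))"
        using C1[of z] C2[of z] by (simp add: distrib_right)
      finally show "norm (iter_dd vs f z + iter_dd vs g z) \<le> (C1 + C2) * W z powr (m - sum_list (map c vs))" .
    qed
  qed
qed

lemma subseq_snoc_left: "subseq us ws \<Longrightarrow> subseq us (ws @ [v])"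
  by (rule subseq_rev_drop_many)

lemma Gd_mult:
  fixes f g :: "'a::euclidean_space \<Rightarrow> 'b::real_normed_algebra"
  assumes pos: "\<forall>z. 0 < W z"
  shows "Gall W c B m1 vs f \<Longrightarrow> Gall W c B m2 vs g \<Longrightarrow> Gd W c B (m1 + m2) vs (\<lambda>z. f z * g z)"
proof (induction "length vs" arbitrary: vs f g m1 m2 rule: less_induct)
  case less
  show ?case
  proof (cases vs rule: rev_cases)
    case Nil
    have f: "Gd W c B m1 [] f" and g: "Gd W c B m2 [] g" using less.prems Gall_Gd Nil by blast+
    show ?thesis unfolding Nil Gd_def okd_def bnd_def iter_dd.simps
    proof (intro conjI impI)
      show "continuous_on UNIV (\<lambda>z. f z * g z)"
        using f g unfolding Gd_def okd_def by (auto intro: continuous_on_mult)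
      show "\<forall>b\<in>Basis. ldiff b (\<lambda>z. f z * g z)"
        using f g unfolding Gd_def okd_def by (auto intro: ldiff_mult)
    next
      assume B
      then obtain C1 C2 where C1: "\<And>z. norm (f z) \<le> C1 * W z powr m1"
        and C2: "\<And>z. norm (g z) \<le> C2 * W z powr m2"
        using f g unfolding Gd_def bnd_def by auto
      show "\<exists>C. \<forall>z. norm (f z * g z) \<le> C * W z powr (m1 + m2 - sum_list (map c []))"
      proof (intro exI allI)
        fix z
        have "norm (f z * g z) \<le> norm (f z) * norm (g z)" by (rule norm_mult_ineq)
        also have "\<dots> \<le> (C1 * W z powr m1) * (C2 * W z powr m2)"
          by (rule mult_mono[OF C1 C2]) (auto intro: order_trans[OF norm_ge_zero C1])
        also have "\<dots> = (C1 * C2) * W z powr (m1 + m2 - sum_list (map c []))"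
          using pos by (simp add: powr_add)
        finally show "norm (f z * g z) \<le> (C1 * C2) * W z powr (m1 + m2 - sum_list (map c []))" .
      qed
    qed simp
  next
    case (snoc ws v)
    have v: "v \<in> Basis" using Gall_basis[OF less.prems(1)] snoc by simp
    have lf: "ldiff v f" "ldiff v g" using Gall_ldiff less.prems v by blast+
    define h1 where "h1 = (\<lambda>z. f z * dd v g z)"
    define h2 where "h2 = (\<lambda>z. dd v f z * g z)"
    have dfg: "dd v (\<lambda>z. f z * g z) = (\<lambda>z. h1 z + h2 z)"
      by (rule ext) (simp add: dd_mult[OF lf] h1_def h2_def)
    have G1: "Gall W c B (m1 + m2 - c v) ws h1"
      unfolding Gall_def
    proof (intro allI impI)
      fix us assume us: "subseq us ws"
      have len: "length us < length vs" using list_emb_length[OF us] snoc by simp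
      have a: "Gall W c B m1 us f" using less.prems(1) Gall_sub snoc us subseq_snoc_left by blast
      have b: "Gall W c B (m2 - c v) us (dd v g)"
        using Gall_snoc_dd less.prems(2) snoc Gall_sub us by blast
      from less.hyps[OF len a b] have "Gd W c B (m1 + (m2 - c v)) us h1" by (simp add: h1_def)
      then show "Gd W c B (m1 + m2 - c v) us h1" by (simp add: algebra_simps)
    qed
    have G2: "Gall W c B (m1 + m2 - c v) ws h2"
      unfolding Gall_def
    proof (intro allI impI)
      fix us assume us: "subseq us ws"
      have len: "length us < length vs" using list_emb_length[OF us] snoc by simp
      have a: "Gall W c B m2 us g" using less.prems(2) Gall_sub snoc us subseq_snoc_left by blast
      have b: "Gall W c B (m1 - c v) us (dd v f)"
        using Gall_snoc_dd less.prems(1) snoc Gall_sub us by blast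
      from less.hyps[OF len b a] have "Gd W c B (m1 - c v + m2) us h2" by (simp add: h2_def)
      then show "Gd W c B (m1 + m2 - c v) us h2" by (simp add: algebra_simps)
    qed
    have "Gd W c B (m1 + m2 - c v) ws (\<lambda>z. h1 z + h2 z)" by (rule Gd_add[OF G1 G2])
    moreover have "iter_dd ws (\<lambda>z. h1 z + h2 z) = iter_dd (ws@[v]) (\<lambda>z. f z * g z)"
      by (simp add: iter_dd_snoc dfg)
    ultimately show ?thesis using Gd_snoc_back snoc v by metis
  qed
qed

lemma iter_dd_lin:
  assumes L: "bounded_linear L" and "Gall W c B m vs f"
  shows "iter_dd vs (\<lambda>z. L (f z)) = (\<lambda>z. L (iter_dd vs f z))"
  using assms(2)
proof (induction vs)
  case Nil thus ?case by simp
next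
  case (Cons v vs)
  have "subseq vs (v#vs)" by (metis list_emb_Cons subseq_order.order_refl)
  then have G: "Gall W c B m vs f" using Cons.prems Gall_sub by blast
  have v: "v \<in> Basis" using Gall_basis[OF Cons.prems(1)] by simp
  have l: "ldiff v (iter_dd vs f)"
    using Gall_Gd[OF G] v unfolding Gd_def okd_def by auto
  show ?case by (simp add: Cons.IH[OF G] dd_lin[OF L l])
qed

lemma Gd_lin:
  assumes L: "bounded_linear L" and G: "Gall W c B m vs f"
  shows "Gd W c B m vs (\<lambda>z. L (f z))"
proof -
  have f: "Gd W c B m vs f" using G Gall_Gd by blast
  show ?thesis
    unfolding Gd_def okd_def bnd_def iter_dd_lin[OF L G]
  proof (intro conjI impI)
    show "set vs \<subseteq> Basis" using f unfolding Gd_def okd_def by simp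
    show "continuous_on UNIV (\<lambda>z. L (iter_dd vs f z))"
      using f unfolding Gd_def okd_def by (auto intro: bounded_linear.continuous_on[OF L])
    show "\<forall>b\<in>Basis. ldiff b (\<lambda>z. L (iter_dd vs f z))"
      using f unfolding Gd_def okd_def by (auto intro: ldiff_lin[OF L])
  next
    assume B
    then obtain C where C: "\<And>z. norm (iter_dd vs f z) \<le> C * W z powr (m - sum_list (map c vs))"
      using f unfolding Gd_def bnd_def by blast
    obtain K where K: "K > 0" "\<And>x. norm (L x) \<le> norm x * K"
      using bounded_linear.pos_bounded[OF L] by blast
    show "\<exists>C. \<forall>z. norm (L (iter_dd vs f z)) \<le> C * W z powr (m - sum_list (map c vs))"
    proof (intro exI allI)
      fix z
      have "norm (L (iter_dd vs f z)) \<le> norm (iter_dd vs f z) * K" by (rule K(2))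
      also have "\<dots> \<le> (C * W z powr (m - sum_list (map c vs))) * K"
        using C[of z] K(1) by (simp add: mult_right_mono)
      finally show "norm (L (iter_dd vs f z)) \<le> (C * K) * W z powr (m - sum_list (map c vs))"
        by (simp add: algebra_simps)
    qed
  qed
qed

lemma comp_has:
  fixes F :: "complex \<Rightarrow> complex" and s :: "'a::real_normed_vector \<Rightarrow> complex"
  assumes "smooth F" "ldiff v s"
  shows "((\<lambda>t. F (s (z + t *\<^sub>R v))) has_vector_derivative
     (dd 1 F (s z) * of_real (Re (dd v s z)) + dd \<i> F (s z) * of_real (Im (dd v s z)))) (at 0)"
proof -
  have 1: "((\<lambda>t. s (z + t *\<^sub>R v)) has_derivative (\<lambda>t. t *\<^sub>R dd v s z)) (at 0)"
    using dd_has[OF assms(2)] by (simp add: has_vector_derivative_def)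
  have 2: "(F has_derivative (\<lambda>h. Re h *\<^sub>R dd 1 F (s z) + Im h *\<^sub>R dd \<i> F (s z))) (at ((\<lambda>t. s (z + t *\<^sub>R v)) 0))"
    using F_deriv[OF assms(1)] by simp
  have e: "(\<lambda>t. Re (t *\<^sub>R d) *\<^sub>R a + Im (t *\<^sub>R d) *\<^sub>R b) = (\<lambda>t::real. t *\<^sub>R (a * of_real (Re d) + b * of_real (Im d)))"
    for a b d :: complex
    by (rule ext) (simp add: scaleR_conv_of_real algebra_simps)
  from has_derivative_compose[OF 1 2] show ?thesis unfolding has_vector_derivative_def e .
qed

lemma dd_comp:
  fixes F :: "complex \<Rightarrow> complex" and s :: "'a::real_normed_vector \<Rightarrow> complex"
  assumes "smooth F" "ldiff v s"
  shows "dd v (\<lambda>z. F (s z)) = (\<lambda>z. dd 1 F (s z) * of_real (Re (dd v s z)) + dd \<i> F (s z) * of_real (Im (dd v s z)))"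
  by (rule ext, rule ddI, rule comp_has[OF assms])

lemma ldiff_comp:
  fixes F :: "complex \<Rightarrow> complex" and s :: "'a::real_normed_vector \<Rightarrow> complex"
  assumes "smooth F" "ldiff v s"
  shows "ldiff v (\<lambda>z. F (s z))"
  by (rule ldiffI, rule comp_has[OF assms])

lemma bl_Re: "bounded_linear (\<lambda>w. complex_of_real (Re w))"
  by (rule bounded_linear_compose[OF bounded_linear_of_real bounded_linear_Re])
lemma bl_Im: "bounded_linear (\<lambda>w. complex_of_real (Im w))"
  by (rule bounded_linear_compose[OF bounded_linear_of_real bounded_linear_Im])

lemma Gd_comp:
  fixes s :: "'a::euclidean_space \<Rightarrow> complex"
  assumes pos: "\<forall>z. 0 < W z"
  shows "smooth (F::complex \<Rightarrow> complex) \<Longrightarrow> Gall W c B 0 vs s \<Longrightarrow> Gd W c B 0 vs (\<lambda>z. F (s z))"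
proof (induction "length vs" arbitrary: vs s F rule: less_induct)
  case less
  have B1: "1 \<in> (Basis::complex set)" "\<i> \<in> (Basis::complex set)" by (simp_all add: Basis_complex_def)
  show ?case
  proof (cases vs rule: rev_cases)
    case Nil
    have s: "Gd W c B 0 [] s" using less.prems Gall_Gd Nil by blast
    show ?thesis unfolding Nil Gd_def okd_def bnd_def iter_dd.simps
    proof (intro conjI impI)
      show "continuous_on UNIV (\<lambda>z. F (s z))"
        using s continuous_on_compose2[OF smooth_cont[OF less.prems(1)]] unfolding Gd_def okd_def by auto
      show "\<forall>b\<in>Basis. ldiff b (\<lambda>z. F (s z))"
        using s ldiff_comp[OF less.prems(1)] unfolding Gd_def okd_def by auto
    next
      assume B
      then obtain C where C: "\<And>z. norm (s z) \<le> C * W z powr 0"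
        using s unfolding Gd_def bnd_def by auto
      have C': "s z \<in> cball 0 C" for z using C[of z] pos[rule_format, of z] by simp
      have cpt: "compact (F ` cball 0 C)"
        by (rule compact_continuous_image[OF continuous_on_subset[OF smooth_cont[OF less.prems(1)]] compact_cball]) simp
      obtain K where K: "\<And>x. x \<in> F ` cball 0 C \<Longrightarrow> norm x \<le> K"
        using compact_imp_bounded[OF cpt] unfolding bounded_iff by blast
      show "\<exists>C. \<forall>z. norm (F (s z)) \<le> C * W z powr (0 - sum_list (map c []))"
      proof (intro exI allI)
        fix z
        have "W z \<noteq> 0" using pos[rule_format, of z] by simp
        have "F (s z) \<in> F ` cball 0 C" using C'[of z] by (rule imageI)
        then have "norm (F (s z)) \<le> K" by (rule K)
        then show "norm (F (s z)) \<le> K * W z powr (0 - sum_list (map c []))"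
          using \<open>W z \<noteq> 0\<close> by simp
      qed
    qed simp
  next
    case (snoc ws v)
    have v: "v \<in> Basis" using Gall_basis[OF less.prems(2)] snoc by simp
    have ls: "ldiff v s" using Gall_ldiff less.prems v by blast
    have sm1: "smooth (dd 1 F)" and sm2: "smooth (dd \<i> F)" using smooth_dd[OF less.prems(1)] B1 by auto
    define h1 where "h1 = (\<lambda>z. dd 1 F (s z) * of_real (Re (dd v s z)))"
    define h2 where "h2 = (\<lambda>z. dd \<i> F (s z) * of_real (Im (dd v s z)))"
    have dF: "dd v (\<lambda>z. F (s z)) = (\<lambda>z. h1 z + h2 z)"
      unfolding dd_comp[OF less.prems(1) ls] h1_def h2_def ..
    have sv: "Gall W c B (0 - c v) ws (dd v s)" using Gall_snoc_dd less.prems(2) snoc by blast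
    have G: "Gall W c B (0 - c v) ws (\<lambda>z. dd G F (s z) * of_real (L (dd v s z)))"
      if sG: "smooth (dd G F)" and L: "bounded_linear (\<lambda>w. complex_of_real (L w))" for G L
      unfolding Gall_def
    proof (intro allI impI)
      fix us assume us: "subseq us ws"
      have a: "Gall W c B 0 us (\<lambda>z. dd G F (s z))"
        unfolding Gall_def
      proof (intro allI impI)
        fix u assume u: "subseq u us"
        have len: "length u < length vs" using list_emb_length[OF u] list_emb_length[OF us] snoc by simp
        have "subseq u (ws @ [v])" using subseq_order.order_trans[OF u subseq_snoc_left[OF us]] .
        then have "Gall W c B 0 u s" using Gall_sub[OF less.prems(2)] snoc by simp
        from less.hyps[OF len sG this] show "Gd W c B 0 u (\<lambda>z. dd G F (s z))" .
      qed
      have b: "Gall W c B (0 - c v) us (\<lambda>z. complex_of_real (L (dd v s z)))"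
        unfolding Gall_def
      proof (intro allI impI)
        fix u assume u: "subseq u us"
        have "Gall W c B (0 - c v) u (dd v s)" using Gall_sub[OF sv subseq_order.order_trans[OF u us]] .
        from Gd_lin[OF L this] show "Gd W c B (0 - c v) u (\<lambda>z. complex_of_real (L (dd v s z)))" .
      qed
      from Gd_mult[OF pos a b] show "Gd W c B (0 - c v) us (\<lambda>z. dd G F (s z) * of_real (L (dd v s z)))"
        by simp
    qed
    have "Gd W c B (0 - c v) ws (\<lambda>z. h1 z + h2 z)"
      unfolding h1_def h2_def by (rule Gd_add[OF G[OF sm1 bl_Re] G[OF sm2 bl_Im]])
    moreover have "iter_dd ws (\<lambda>z. h1 z + h2 z) = iter_dd (ws@[v]) (\<lambda>z. F (s z))"
      by (simp add: iter_dd_snoc dF)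
    ultimately show ?thesis using Gd_snoc_back snoc v by metis
  qed
qed

definition Class :: "('a::euclidean_space \<Rightarrow> real) \<Rightarrow> ('a \<Rightarrow> real) \<Rightarrow> ('a list \<Rightarrow> bool) \<Rightarrow> ('a \<Rightarrow> 'b::real_normed_vector) \<Rightarrow> bool" where
  "Class W c P f \<longleftrightarrow> (\<forall>vs. set vs \<subseteq> Basis \<longrightarrow> Gd W c False 0 vs f) \<and> (\<forall>vs. P vs \<longrightarrow> Gd W c True 0 vs f)"

definition downcl :: "('a list \<Rightarrow> bool) \<Rightarrow> bool" where
  "downcl P \<longleftrightarrow> (\<forall>vs us. P vs \<longrightarrow> subseq us vs \<longrightarrow> P us)"

lemma subseq_set: "subseq us vs \<Longrightarrow> set us \<subseteq> set vs"
proof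
  fix x assume "subseq us vs" "x \<in> set us"
  from list_emb_set[OF this] show "x \<in> set vs" by auto
qed

lemma Class_Gall1: "Class W c P f \<Longrightarrow> set vs \<subseteq> Basis \<Longrightarrow> Gall W c False 0 vs f"
  unfolding Class_def Gall_def using subseq_set by (meson order_trans)

lemma Class_Gall2: "Class W c P f \<Longrightarrow> downcl P \<Longrightarrow> P vs \<Longrightarrow> Gall W c True 0 vs f"
  unfolding Class_def Gall_def downcl_def by blast

lemma Class_ldiff: "Class W c P f \<Longrightarrow> b \<in> Basis \<Longrightarrow> ldiff b f"
  using Gall_ldiff[OF Class_Gall1[of W c P f "[]"]] by simp

lemma Class_add:
  assumes P: "downcl P" and f: "Class W c P f" and g: "Class W c P g"
  shows "Class W c P (\<lambda>z. f z + g z)"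
  unfolding Class_def
proof (intro conjI allI impI)
  fix vs :: "'a list" assume "set vs \<subseteq> Basis"
  then show "Gd W c False 0 vs (\<lambda>z. f z + g z)" by (intro Gd_add Class_Gall1[OF f] Class_Gall1[OF g])
next
  fix vs :: "'a list" assume "P vs"
  then show "Gd W c True 0 vs (\<lambda>z. f z + g z)" by (intro Gd_add Class_Gall2[OF f P] Class_Gall2[OF g P])
qed

lemma Class_mult:
  fixes f g :: "'a::euclidean_space \<Rightarrow> 'b::real_normed_algebra"
  assumes pos: "\<forall>z. 0 < W z" and P: "downcl P" and f: "Class W c P f" and g: "Class W c P g"
  shows "Class W c P (\<lambda>z. f z * g z)"
  unfolding Class_def
proof (intro conjI allI impI)
  fix vs :: "'a list" assume "set vs \<subseteq> Basis"
  then show "Gd W c False 0 vs (\<lambda>z. f z * g z)"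
    using Gd_mult[OF pos Class_Gall1[OF f] Class_Gall1[OF g]] by simp
next
  fix vs :: "'a list" assume "P vs"
  then show "Gd W c True 0 vs (\<lambda>z. f z * g z)"
    using Gd_mult[OF pos Class_Gall2[OF f P] Class_Gall2[OF g P]] by simp
qed

lemma Class_lin:
  fixes f :: "'a::euclidean_space \<Rightarrow> 'b::real_normed_vector" and L :: "'b \<Rightarrow> 'c::real_normed_vector"
  assumes L: "bounded_linear L" and P: "downcl P" and f: "Class W c P f"
  shows "Class W c P (\<lambda>z. L (f z))"
  unfolding Class_def
proof (intro conjI allI impI)
  fix vs :: "'a list" assume "set vs \<subseteq> Basis"
  then show "Gd W c False 0 vs (\<lambda>z. L (f z))" by (intro Gd_lin[OF L] Class_Gall1[OF f])
next
  fix vs :: "'a list" assume "P vs"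
  then show "Gd W c True 0 vs (\<lambda>z. L (f z))" by (intro Gd_lin[OF L] Class_Gall2[OF f P])
qed

lemma Class_comp:
  fixes s :: "'a::euclidean_space \<Rightarrow> complex" and F :: "complex \<Rightarrow> complex"
  assumes pos: "\<forall>z. 0 < W z" and P: "downcl P" and F: "smooth F" and s: "Class W c P s"
  shows "Class W c P (\<lambda>z. F (s z))"
  unfolding Class_def
proof (intro conjI allI impI)
  fix vs :: "'a list" assume "set vs \<subseteq> Basis"
  then show "Gd W c False 0 vs (\<lambda>z. F (s z))" by (intro Gd_comp[OF pos F] Class_Gall1[OF s])
next
  fix vs :: "'a list" assume "P vs"
  then show "Gd W c True 0 vs (\<lambda>z. F (s z))" by (intro Gd_comp[OF pos F] Class_Gall2[OF s P])
qed

definition E :: "'a::euclidean_space \<Rightarrow> ('a \<Rightarrow> 'b::real_normed_vector) \<Rightarrow> 'a \<Rightarrow> 'b" where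
  "E d h = (\<lambda>z. (z \<bullet> d) *\<^sub>R dd d h z)"

fun Eit :: "'a::euclidean_space list \<Rightarrow> ('a \<Rightarrow> 'b::real_normed_vector) \<Rightarrow> 'a \<Rightarrow> 'b" where
  "Eit [] h = h"
| "Eit (d # ds) h = E d (Eit ds h)"

lemma Eit_snoc: "Eit (ds @ [d]) h = Eit ds (E d h)"
  by (induction ds) auto

definition KK :: "('a::euclidean_space \<Rightarrow> real) \<Rightarrow> ('a \<Rightarrow> real) \<Rightarrow> ('a list \<Rightarrow> bool) \<Rightarrow> 'a list \<Rightarrow> ('a \<Rightarrow> 'b::real_normed_vector) \<Rightarrow> bool" where
  "KK W c P ds h \<longleftrightarrow> set ds \<subseteq> Basis \<and> (\<forall>us. subseq us ds \<longrightarrow> Class W c P (Eit us h))"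

lemma KK_sub: "KK W c P ds h \<Longrightarrow> subseq us ds \<Longrightarrow> KK W c P us h"
  unfolding KK_def using subseq_order.order_trans subseq_set by blast

lemma KK_Class: "KK W c P ds h \<Longrightarrow> Class W c P (Eit ds h)"
  unfolding KK_def by simp

lemma KK_snoc_E: "KK W c P (ds @ [d]) h \<Longrightarrow> KK W c P ds (E d h)"
  unfolding KK_def by (auto simp: Eit_snoc[symmetric])

lemma E_add: "ldiff d f \<Longrightarrow> ldiff d g \<Longrightarrow> E d (\<lambda>z. f z + g z) = (\<lambda>z. E d f z + E d g z)"
  unfolding E_def by (rule ext) (simp add: dd_add scaleR_add_right)

lemma Eit_add:
  assumes "KK W c P ds f" "KK W c P ds g"
  shows "Eit ds (\<lambda>z. f z + g z) = (\<lambda>z. Eit ds f z + Eit ds g z)"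
  using assms
proof (induction ds)
  case Nil thus ?case by simp
next
  case (Cons d ds)
  have "subseq ds (d#ds)" by (metis list_emb_Cons subseq_order.order_refl)
  then have G: "KK W c P ds f" "KK W c P ds g" using Cons.prems KK_sub by blast+
  have d: "d \<in> Basis" using Cons.prems(1) unfolding KK_def by simp
  have l: "ldiff d (Eit ds f)" "ldiff d (Eit ds g)"
    using KK_Class[OF G(1)] KK_Class[OF G(2)] Class_ldiff d by blast+
  show ?case by (simp add: Cons.IH[OF G] E_add[OF l])
qed

lemma E_mult:
  fixes f g :: "'a::euclidean_space \<Rightarrow> 'b::real_normed_algebra"
  shows "ldiff d f \<Longrightarrow> ldiff d g \<Longrightarrow> E d (\<lambda>z. f z * g z) = (\<lambda>z. f z * E d g z + E d f z * g z)"
  unfolding E_def by (rule ext) (simp add: dd_mult scaleR_add_right)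

lemma E_lin:
  assumes L: "bounded_linear L" and l: "ldiff d f"
  shows "E d (\<lambda>z. L (f z)) = (\<lambda>z. L (E d f z))"
  unfolding E_def by (rule ext) (simp add: dd_lin[OF L l] linear.scaleR[OF bounded_linear.linear[OF L]])

lemma Eit_lin:
  assumes L: "bounded_linear L" and "KK W c P ds f"
  shows "Eit ds (\<lambda>z. L (f z)) = (\<lambda>z. L (Eit ds f z))"
  using assms(2)
proof (induction ds)
  case Nil thus ?case by simp
next
  case (Cons d ds)
  have "subseq ds (d#ds)" by (metis list_emb_Cons subseq_order.order_refl)
  then have G: "KK W c P ds f" using Cons.prems KK_sub by blast
  have d: "d \<in> Basis" using Cons.prems(1) unfolding KK_def by simp
  have l: "ldiff d (Eit ds f)" using KK_Class[OF G] Class_ldiff d by blast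
  show ?case by (simp add: Cons.IH[OF G] E_lin[OF L l])
qed

lemma KK_lin: "bounded_linear L \<Longrightarrow> downcl P \<Longrightarrow> KK W c P ds f \<Longrightarrow> KK W c P ds (\<lambda>z. L (f z))"
  unfolding KK_def[of W c P ds "\<lambda>z. L (f z)"]
proof (intro conjI allI impI)
  fix us assume L: "bounded_linear L" and P: "downcl P" and K: "KK W c P ds f" and us: "subseq us ds"
  have K': "KK W c P us f" by (rule KK_sub[OF K us])
  show "Class W c P (Eit us (\<lambda>z. L (f z)))"
    unfolding Eit_lin[OF L K'] by (rule Class_lin[OF L P KK_Class[OF K']])
qed (simp add: KK_def)

lemma E_comp:
  fixes s :: "'a::euclidean_space \<Rightarrow> complex" and F :: "complex \<Rightarrow> complex"
  assumes "smooth F" "ldiff d s"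
  shows "E d (\<lambda>z. F (s z)) = (\<lambda>z. dd 1 F (s z) * of_real (Re (E d s z)) + dd \<i> F (s z) * of_real (Im (E d s z)))"
  unfolding E_def dd_comp[OF assms]
  by (rule ext) (simp add: scaleR_conv_of_real algebra_simps)

lemma KK_base: "KK W c P ds f \<Longrightarrow> Class W c P f"
  using KK_Class[OF KK_sub[of W c P ds f "[]"]] by simp

lemma KK_snoc_sub: "KK W c P (ws @ [d]) h \<Longrightarrow> subseq us ws \<Longrightarrow> KK W c P us (E d h)"
  by (rule KK_snoc_E, erule KK_sub) simp

lemma K_mult:
  fixes f g :: "'a::euclidean_space \<Rightarrow> 'b::real_normed_algebra"
  assumes pos: "\<forall>z. 0 < W z" and P: "downcl P"
  shows "KK W c P ds f \<Longrightarrow> KK W c P ds g \<Longrightarrow> Class W c P (Eit ds (\<lambda>z. f z * g z))"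
proof (induction "length ds" arbitrary: ds f g rule: less_induct)
  case less
  show ?case
  proof (cases ds rule: rev_cases)
    case Nil
    then show ?thesis using Class_mult[OF pos P KK_Class[OF less.prems(1)] KK_Class[OF less.prems(2)]] by simp
  next
    case (snoc ws d)
    have d: "d \<in> Basis" using less.prems(1) snoc unfolding KK_def by simp
    have lf: "ldiff d f" "ldiff d g" using Class_ldiff[OF KK_base[OF less.prems(1)] d] Class_ldiff[OF KK_base[OF less.prems(2)] d] by auto
    define h1 where "h1 = (\<lambda>z. f z * E d g z)"
    define h2 where "h2 = (\<lambda>z. E d f z * g z)"
    have ws: "set ws \<subseteq> Basis" using less.prems(1) snoc unfolding KK_def by simp
    have G1: "KK W c P ws h1"
      unfolding KK_def
    proof (intro conjI allI impI ws)
      fix us assume us: "subseq us ws"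
      have len: "length us < length ds" using list_emb_length[OF us] snoc by simp
      have "subseq us ds" using subseq_snoc_left[OF us] snoc by simp
      have a: "KK W c P us f" by (rule KK_sub[OF less.prems(1) \<open>subseq us ds\<close>])
      have b: "KK W c P us (E d g)" using KK_snoc_sub[OF _ us] less.prems(2) snoc by simp
      from less.hyps[OF len a b] show "Class W c P (Eit us h1)" by (simp add: h1_def)
    qed
    have G2: "KK W c P ws h2"
      unfolding KK_def
    proof (intro conjI allI impI ws)
      fix us assume us: "subseq us ws"
      have len: "length us < length ds" using list_emb_length[OF us] snoc by simp
      have "subseq us ds" using subseq_snoc_left[OF us] snoc by simp
      have a: "KK W c P us g" by (rule KK_sub[OF less.prems(2) \<open>subseq us ds\<close>])
      have b: "KK W c P us (E d f)" using KK_snoc_sub[OF _ us] less.prems(1) snoc by simp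
      from less.hyps[OF len b a] show "Class W c P (Eit us h2)" by (simp add: h2_def)
    qed
    have "Class W c P (Eit ws (\<lambda>z. h1 z + h2 z))"
      unfolding Eit_add[OF G1 G2] by (rule Class_add[OF P KK_Class[OF G1] KK_Class[OF G2]])
    moreover have "Eit ds (\<lambda>z. f z * g z) = Eit ws (\<lambda>z. h1 z + h2 z)"
      by (simp add: snoc Eit_snoc E_mult[OF lf] h1_def h2_def)
    ultimately show ?thesis by simp
  qed
qed

lemma K_comp:
  fixes s :: "'a::euclidean_space \<Rightarrow> complex" and F :: "complex \<Rightarrow> complex"
  assumes pos: "\<forall>z. 0 < W z" and P: "downcl P"
  shows "smooth F \<Longrightarrow> KK W c P ds s \<Longrightarrow> Class W c P (Eit ds (\<lambda>z. F (s z)))"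
proof (induction "length ds" arbitrary: ds s F rule: less_induct)
  case less
  have B1: "1 \<in> (Basis::complex set)" "\<i> \<in> (Basis::complex set)" by (simp_all add: Basis_complex_def)
  show ?case
  proof (cases ds rule: rev_cases)
    case Nil
    then show ?thesis using Class_comp[OF pos P less.prems(1) KK_Class[OF less.prems(2)]] by simp
  next
    case (snoc ws d)
    have d: "d \<in> Basis" using less.prems(2) snoc unfolding KK_def by simp
    have ls: "ldiff d s" using Class_ldiff[OF KK_base[OF less.prems(2)] d] .
    have sm1: "smooth (dd 1 F)" and sm2: "smooth (dd \<i> F)" using smooth_dd[OF less.prems(1)] B1 by auto
    have ws: "set ws \<subseteq> Basis" using less.prems(2) snoc unfolding KK_def by simp
    have G: "KK W c P ws (\<lambda>z. dd G F (s z) * of_real (L (E d s z)))"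
      if sG: "smooth (dd G F)" and L: "bounded_linear (\<lambda>w. complex_of_real (L w))" for G L
      unfolding KK_def
    proof (intro conjI allI impI ws)
      fix us assume us: "subseq us ws"
      have a: "KK W c P us (\<lambda>z. dd G F (s z))"
        unfolding KK_def
      proof (intro conjI allI impI)
        show "set us \<subseteq> Basis" using ws subseq_set[OF us] by blast
        fix u assume u: "subseq u us"
        have len: "length u < length ds" using list_emb_length[OF u] list_emb_length[OF us] snoc by simp
        have "subseq u (ws @ [d])" using subseq_order.order_trans[OF u subseq_snoc_left[OF us]] .
        then have "KK W c P u s" using KK_sub[OF less.prems(2)] snoc by simp
        from less.hyps[OF len sG this] show "Class W c P (Eit u (\<lambda>z. dd G F (s z)))" .
      qed
      have b: "KK W c P us (\<lambda>z. complex_of_real (L (E d s z)))"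
        using KK_lin[OF L P KK_snoc_sub[OF _ us]] less.prems(2) snoc by simp
      show "Class W c P (Eit us (\<lambda>z. dd G F (s z) * of_real (L (E d s z))))"
        by (rule K_mult[OF pos P a b])
    qed
    define h1 where "h1 = (\<lambda>z. dd 1 F (s z) * of_real (Re (E d s z)))"
    define h2 where "h2 = (\<lambda>z. dd \<i> F (s z) * of_real (Im (E d s z)))"
    have G1: "KK W c P ws h1" unfolding h1_def by (rule G[OF sm1 bl_Re])
    have G2: "KK W c P ws h2" unfolding h2_def by (rule G[OF sm2 bl_Im])
    have "Class W c P (Eit ws (\<lambda>z. h1 z + h2 z))"
      unfolding Eit_add[OF G1 G2] by (rule Class_add[OF P KK_Class[OF G1] KK_Class[OF G2]])
    moreover have "Eit ds (\<lambda>z. F (s z)) = Eit ws (\<lambda>z. h1 z + h2 z)"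
      by (simp add: snoc Eit_snoc E_comp[OF less.prems(1) ls] h1_def h2_def)
    ultimately show ?thesis by simp
  qed
qed

lemma idx_enum: "distinct (idx_enum :: 'n::finite list) \<and> set (idx_enum :: 'n list) = UNIV"
proof -
  obtain xs :: "'n list" where xs: "set xs = UNIV" "distinct xs"
    using finite_distinct_list[of "UNIV::'n set"] by auto
  show ?thesis unfolding idx_enum_def by (rule someI[where x=xs]) (simp add: xs)
qed

lemma subseq_replicate: "subseq v (replicate n a) \<Longrightarrow> v = replicate (length v) a \<and> length v \<le> n"
proof
  assume s: "subseq v (replicate n a)"
  show "v = replicate (length v) a"
  proof (rule replicate_eqI)
    fix y assume "y \<in> set v"
    then have "y \<in> set (replicate n a)" using subseq_set[OF s] by blast
    then show "y = a" by (simp split: if_splits)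
  qed simp
  show "length v \<le> n" using list_emb_length[OF s] by simp
qed

lemma subseq_concat_rep:
  "distinct xs \<Longrightarrow> subseq vs (concat (map (\<lambda>i. replicate (\<alpha> i) (e i)) xs)) \<Longrightarrow>
   \<exists>\<alpha>'. (\<forall>i. \<alpha>' i \<le> \<alpha> i) \<and> vs = concat (map (\<lambda>i. replicate (\<alpha>' i) (e i)) xs)"
proof (induction xs arbitrary: vs)
  case Nil
  then show ?case by (intro exI[of _ "\<lambda>_. 0"]) simp
next
  case (Cons i xs)
  from Cons.prems(2) obtain v1 v2 where v: "vs = v1 @ v2" "subseq v1 (replicate (\<alpha> i) (e i))"
    "subseq v2 (concat (map (\<lambda>i. replicate (\<alpha> i) (e i)) xs))"
    by (auto elim: subseq_appendE)
  from Cons.IH[OF _ v(3)] Cons.prems(1) obtain a where a: "\<forall>i. a i \<le> \<alpha> i"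
    "v2 = concat (map (\<lambda>i. replicate (a i) (e i)) xs)" by auto
  have r: "v1 = replicate (length v1) (e i)" "length v1 \<le> \<alpha> i" using subseq_replicate[OF v(2)] by auto
  have "i \<notin> set xs" using Cons.prems(1) by simp
  then have m: "map (\<lambda>j. replicate ((a(i := length v1)) j) (e j)) xs = map (\<lambda>j. replicate (a j) (e j)) xs"
    by (intro map_cong) auto
  have c: "concat (map (\<lambda>j. replicate ((a(i := length v1)) j) (e j)) (i#xs)) = replicate (length v1) (e i) @ concat (map (\<lambda>j. replicate (a j) (e j)) xs)"
    by (simp only: list.map concat.simps m fun_upd_same)
  show ?case
  proof (intro exI conjI)
    show "\<forall>j. (a(i := length v1)) j \<le> \<alpha> j" using a r by auto
    show "vs = concat (map (\<lambda>j. replicate ((a(i := length v1)) j) (e j)) (i#xs))"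
      unfolding c using v(1) a(2) r(1) by simp
  qed
qed

lemma subseq_mdirs: "subseq vs (mdirs e \<alpha>) \<Longrightarrow> \<exists>\<alpha>'. (\<forall>i. \<alpha>' i \<le> \<alpha> i) \<and> vs = mdirs e \<alpha>'"
  unfolding mdirs_def using subseq_concat_rep idx_enum by blast

lemma mdirs_zero[simp]: "mdirs e (\<lambda>_. 0) = []"
  unfolding mdirs_def by (induction idx_enum) auto

lemma set_mdirs: "set (mdirs e \<alpha>) \<subseteq> range e"
  unfolding mdirs_def by auto

lemma distinct_concat_rep:
  "distinct xs \<Longrightarrow> inj e \<Longrightarrow> (\<forall>i. \<gamma> i \<le> 1) \<Longrightarrow> distinct (concat (map (\<lambda>i. replicate (\<gamma> i) (e i)) xs))"
proof (induction xs)
  case Nil then show ?case by simp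
next
  case (Cons i xs)
  have d1: "distinct (replicate (\<gamma> i) (e i))"
  proof (cases "\<gamma> i")
    case (Suc k)
    have "\<gamma> i \<le> 1" using Cons.prems(3) by blast
    then have "k = 0" using Suc by simp
    then show ?thesis using Suc by simp
  qed simp
  have nm: "e i \<notin> set (concat (map (\<lambda>i. replicate (\<gamma> i) (e i)) xs))"
  proof
    assume "e i \<in> set (concat (map (\<lambda>i. replicate (\<gamma> i) (e i)) xs))"
    then obtain j where j: "j \<in> set xs" "e i = e j" by (auto split: if_splits)
    then have "i = j" using Cons.prems(2) by (simp add: inj_eq)
    then show False using j Cons.prems(1) by simp
  qed
  have d2: "distinct (concat (map (\<lambda>i. replicate (\<gamma> i) (e i)) xs))"
    using Cons.IH Cons.prems by simp
  have sub: "set (replicate (\<gamma> i) (e i)) \<subseteq> {e i}" by auto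
  have "distinct (replicate (\<gamma> i) (e i) @ concat (map (\<lambda>i. replicate (\<gamma> i) (e i)) xs))"
    unfolding distinct_append using d1 d2 nm sub by blast
  then show ?case by (simp only: list.map concat.simps)
qed

lemma distinct_mdirs: "inj e \<Longrightarrow> (\<forall>i. \<gamma> i \<le> 1) \<Longrightarrow> distinct (mdirs e \<gamma>)"
  unfolding mdirs_def using distinct_concat_rep idx_enum by blast

lemma sum_list_concat_rep:
  fixes c :: "'a \<Rightarrow> real"
  shows "sum_list (map c (concat (map (\<lambda>i. replicate (\<alpha> i) (e i)) xs))) = (\<Sum>i\<leftarrow>xs. real (\<alpha> i) * c (e i))"
proof (induction xs)
  case (Cons i xs)
  have "sum_list (map c (concat (map (\<lambda>i. replicate (\<alpha> i) (e i)) (i # xs))))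
     = sum_list (map c (replicate (\<alpha> i) (e i))) + sum_list (map c (concat (map (\<lambda>i. replicate (\<alpha> i) (e i)) xs)))"
    by (simp only: list.map concat.simps map_append sum_list_append)
  also have "sum_list (map c (replicate (\<alpha> i) (e i))) = real (\<alpha> i) * c (e i)"
    by (simp only: map_replicate sum_list_replicate)
  finally show ?case using Cons.IH by simp
qed simp

lemma prod_list_concat_rep:
  fixes g :: "'a \<Rightarrow> real"
  shows "prod_list (map g (concat (map (\<lambda>i. replicate (\<alpha> i) (e i)) xs))) = (\<Prod>i\<leftarrow>xs. g (e i) ^ \<alpha> i)"
proof (induction xs)
  case (Cons i xs)
  have "prod_list (map g (concat (map (\<lambda>i. replicate (\<alpha> i) (e i)) (i # xs))))
     = prod_list (map g (replicate (\<alpha> i) (e i))) * prod_list (map g (concat (map (\<lambda>i. replicate (\<alpha> i) (e i)) xs)))"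
    by (simp only: list.map concat.simps map_append prod_list.append)
  also have "prod_list (map g (replicate (\<alpha> i) (e i))) = g (e i) ^ \<alpha> i"
    by (simp only: map_replicate prod_list_replicate)
  finally show ?case using Cons.IH by simp
qed simp

definition exd :: "'n::finite \<Rightarrow> (real^'n) \<times> (real^'n)" where "exd i = (axis i 1, 0)"
definition exi :: "'n::finite \<Rightarrow> (real^'n) \<times> (real^'n)" where "exi i = (0, axis i 1)"
definition cw :: "real \<Rightarrow> (real^'n::finite) \<times> (real^'n) \<Rightarrow> real" where
  "cw r v = (if v \<in> range exi then r else 0)"
definition Pc :: "((real^'n::finite) \<times> (real^'n)) list \<Rightarrow> bool" where
  "Pc vs \<longleftrightarrow> (\<exists>\<alpha> \<beta>. subseq vs (mdirs exd \<alpha> @ mdirs exi \<beta>))"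

lemma Dxxi_eq: "Dxxi \<alpha> \<beta> f = iter_dd (mdirs exd \<alpha> @ mdirs exi \<beta>) f"
  by (simp add: Dxxi_def exd_def[abs_def] exi_def[abs_def])

lemma axis_Basis: "axis i (1::real) \<in> Basis"
  by (auto simp: Basis_vec_def)

lemma exd_basis: "exd i \<in> Basis" and exi_basis: "exi i \<in> Basis"
  by (auto simp: exd_def exi_def Basis_prod_def axis_Basis)

lemma inj_exi: "inj exi"
  by (rule injI) (simp add: exi_def axis_eq_axis)

lemma exd_not_exi: "exd i \<notin> range exi"
  by (auto simp: exd_def exi_def axis_eq_0_iff)

lemma set_canon: "set (mdirs exd \<alpha> @ mdirs exi \<beta>) \<subseteq> Basis"
proof -
  have a: "set (mdirs exd \<alpha>) \<subseteq> Basis" using set_mdirs[of exd \<alpha>] exd_basis by blast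
  have b: "set (mdirs exi \<beta>) \<subseteq> Basis" using set_mdirs[of exi \<beta>] exi_basis by blast
  show ?thesis using a b by simp
qed

lemma downcl_Pc: "downcl Pc"
  unfolding downcl_def Pc_def using subseq_order.order_trans by blast

lemma Pc_canon: "Pc vs \<Longrightarrow> \<exists>\<alpha> \<beta>. vs = mdirs exd \<alpha> @ mdirs exi \<beta>"
proof -
  assume "Pc vs"
  then obtain \<alpha> \<beta> where "subseq vs (mdirs exd \<alpha> @ mdirs exi \<beta>)" unfolding Pc_def by blast
  then obtain v1 v2 where v: "vs = v1 @ v2" "subseq v1 (mdirs exd \<alpha>)" "subseq v2 (mdirs exi \<beta>)"
    by (rule subseq_appendE)
  obtain a where "v1 = mdirs exd a" using subseq_mdirs[OF v(2)] by blast
  moreover obtain b where "v2 = mdirs exi b" using subseq_mdirs[OF v(3)] by blast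
  ultimately show ?thesis using v(1) by blast
qed

lemma sum_list_idx: "(\<Sum>i\<leftarrow>(idx_enum::'n::finite list). g i) = (\<Sum>i\<in>UNIV. g i)"
proof -
  have d: "distinct (idx_enum::'n list)" "set (idx_enum::'n list) = UNIV" using idx_enum by auto
  from sum.distinct_set_conv_list[OF d(1), of g] d(2) show ?thesis by simp
qed

lemma prod_list_idx: "(\<Prod>i\<leftarrow>(idx_enum::'n::finite list). g i) = (\<Prod>i\<in>UNIV. g i)"
proof -
  have d: "distinct (idx_enum::'n list)" "set (idx_enum::'n list) = UNIV" using idx_enum by auto
  from prod.distinct_set_conv_list[OF d(1), of g] d(2) show ?thesis by simp
qed

lemma sumc: "sum_list (map (cw r) (mdirs exd \<alpha> @ mdirs exi \<beta>)) = r * real (mabs \<beta>)"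
proof -
  have cw0: "cw r (exd i) = 0" for i by (simp add: cw_def exd_not_exi)
  have "sum_list (map (cw r) (mdirs exd \<alpha>)) = 0"
    unfolding mdirs_def sum_list_concat_rep sum_list_idx by (simp add: cw0)
  moreover have "sum_list (map (cw r) (mdirs exi \<beta>)) = (\<Sum>i\<in>UNIV. real (\<beta> i) * r)"
    unfolding mdirs_def sum_list_concat_rep sum_list_idx by (simp add: cw_def)
  ultimately show ?thesis
    by (simp add: mabs_def sum_distrib_left mult.commute)
qed

lemma mpow_eq: "complex_of_real (mpow \<xi> \<gamma>) = complex_of_real (prod_list (map (\<lambda>d. (x, \<xi>) \<bullet> d) (mdirs exi \<gamma>)))"
  unfolding mdirs_def prod_list_concat_rep prod_list_idx mpow_def
  by (simp add: exi_def inner_axis)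

lemma smooth_iter_ldiff: "smooth f \<Longrightarrow> set vs \<subseteq> Basis \<Longrightarrow> b \<in> Basis \<Longrightarrow> ldiff b (iter_dd vs f)"
  unfolding smooth_def ldiff_def by (simp add: lists_eq_set)

lemma smooth_iter_cont: "smooth f \<Longrightarrow> set vs \<subseteq> Basis \<Longrightarrow> continuous_on UNIV (iter_dd vs f)"
  unfolding smooth_def by (simp add: lists_eq_set)

lemma Eit_conv:
  fixes f :: "'a::euclidean_space \<Rightarrow> 'b::real_normed_vector"
  shows "smooth f \<Longrightarrow> distinct ds \<Longrightarrow> set ds \<subseteq> Basis \<Longrightarrow>
    Eit ds f = (\<lambda>z. prod_list (map (\<lambda>d. z \<bullet> d) ds) *\<^sub>R iter_dd ds f z)"
proof (induction ds)
  case Nil then show ?case by simp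
next
  case (Cons d ds)
  define M where "M z = prod_list (map (\<lambda>d. z \<bullet> d) ds)" for z
  define g where "g = iter_dd ds f"
  have d: "d \<in> Basis" "d \<notin> set ds" "set ds \<subseteq> Basis" using Cons.prems by auto
  have lg: "ldiff d g" unfolding g_def using smooth_iter_ldiff[OF Cons.prems(1) d(3) d(1)] .
  have Mc: "M (z + t *\<^sub>R d) = M z" for z t
  proof -
    have "(z + t *\<^sub>R d) \<bullet> d' = z \<bullet> d'" if "d' \<in> set ds" for d'
    proof -
      have "d \<bullet> d' = 0" using inner_not_same_Basis[OF d(1)] d that by blast
      then show ?thesis by (simp add: inner_add_left)
    qed
    then show ?thesis unfolding M_def by (metis (no_types, lifting) map_eq_conv)
  qed
  have dd_eq: "dd d (\<lambda>z. M z *\<^sub>R g z) z = M z *\<^sub>R dd d g z" for z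
  proof (rule ddI)
    have "(\<lambda>t. M (z + t *\<^sub>R d) *\<^sub>R g (z + t *\<^sub>R d)) = (\<lambda>t. M z *\<^sub>R g (z + t *\<^sub>R d))"
      by (simp add: Mc)
    moreover have "((\<lambda>t. M z *\<^sub>R g (z + t *\<^sub>R d)) has_vector_derivative M z *\<^sub>R dd d g z) (at 0)"
      by (rule bounded_linear.has_vector_derivative[OF bounded_linear_scaleR_right dd_has[OF lg]])
    ultimately show "((\<lambda>t. M (z + t *\<^sub>R d) *\<^sub>R g (z + t *\<^sub>R d)) has_vector_derivative M z *\<^sub>R dd d g z) (at 0)"
      by simp
  qed
  have IH: "Eit ds f = (\<lambda>z. M z *\<^sub>R g z)"
    unfolding M_def g_def using Cons.IH Cons.prems by simp
  have "Eit (d#ds) f = (\<lambda>z. (z \<bullet> d) *\<^sub>R (M z *\<^sub>R dd d g z))"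
    by (simp add: IH E_def dd_eq)
  then show ?case by (simp add: M_def g_def)
qed

lemma S_to_Class:
  fixes f :: "(real^'n::finite) \<times> (real^'n) \<Rightarrow> complex"
  assumes "f \<in> S_class 0 \<rho> \<Lambda>"
  shows "Class (\<lambda>z. \<Lambda> (snd z)) (cw \<rho>) Pc f"
proof -
  have sm: "smooth f" and bd: "\<And>\<alpha> \<beta>. \<exists>C>0. \<forall>x \<xi>. norm (Dxxi \<alpha> \<beta> f (x, \<xi>)) \<le> C * \<Lambda> \<xi> powr (0 - \<rho> * real (mabs \<beta>))"
    using assms unfolding S_class_def by auto
  have ok: "okd vs f" if "set vs \<subseteq> Basis" for vs
    unfolding okd_def using that smooth_iter_cont[OF sm that] smooth_iter_ldiff[OF sm that] by blast
  show ?thesis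
    unfolding Class_def
  proof (intro conjI allI impI)
    fix vs :: "((real^'n) \<times> (real^'n)) list"
    assume "set vs \<subseteq> Basis"
    then show "Gd (\<lambda>z. \<Lambda> (snd z)) (cw \<rho>) False 0 vs f" unfolding Gd_def using ok by simp
  next
    fix vs :: "((real^'n) \<times> (real^'n)) list"
    assume "Pc vs"
    then obtain \<alpha> \<beta> where vs: "vs = mdirs exd \<alpha> @ mdirs exi \<beta>" using Pc_canon by blast
    obtain C where C: "\<forall>x \<xi>. norm (Dxxi \<alpha> \<beta> f (x, \<xi>)) \<le> C * \<Lambda> \<xi> powr (0 - \<rho> * real (mabs \<beta>))"
      using bd by blast
    have "bnd (\<lambda>z. \<Lambda> (snd z)) (cw \<rho>) 0 vs f"
      unfolding bnd_def
    proof (intro exI allI)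
      fix z :: "(real^'n) \<times> (real^'n)"
      obtain x \<xi> where z: "z = (x, \<xi>)" by (cases z)
      show "norm (iter_dd vs f z) \<le> C * \<Lambda> (snd z) powr (0 - sum_list (map (cw \<rho>) vs))"
        using C z unfolding vs sumc Dxxi_eq by simp
    qed
    then show "Gd (\<lambda>z. \<Lambda> (snd z)) (cw \<rho>) True 0 vs f"
      unfolding Gd_def using ok[OF set_canon[of \<alpha> \<beta>]] vs by simp
  qed
qed

lemma Class_smooth: "Class W c P f \<Longrightarrow> smooth f"
  unfolding Class_def Gd_def okd_def smooth_def ldiff_def by (simp add: lists_eq_set)

lemma Class_to_S:
  fixes f :: "(real^'n::finite) \<times> (real^'n) \<Rightarrow> complex"
  assumes "Class (\<lambda>z. \<Lambda> (snd z)) (cw \<rho>) Pc f"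
  shows "f \<in> S_class 0 \<rho> \<Lambda>"
  unfolding S_class_def
proof (intro CollectI conjI allI)
  show "smooth f" by (rule Class_smooth[OF assms])
  fix \<alpha> \<beta> :: "'n \<Rightarrow> nat"
  have "Pc (mdirs exd \<alpha> @ mdirs exi \<beta>)" unfolding Pc_def by blast
  then have "bnd (\<lambda>z. \<Lambda> (snd z)) (cw \<rho>) 0 (mdirs exd \<alpha> @ mdirs exi \<beta>) f"
    using assms unfolding Class_def Gd_def by blast
  then obtain C where C: "\<And>z. norm (iter_dd (mdirs exd \<alpha> @ mdirs exi \<beta>) f z) \<le> C * \<Lambda> (snd z) powr (0 - \<rho> * real (mabs \<beta>))"
    unfolding bnd_def sumc by blast
  show "\<exists>C>0. \<forall>x \<xi>. norm (Dxxi \<alpha> \<beta> f (x, \<xi>)) \<le> C * \<Lambda> \<xi> powr (0 - \<rho> * real (mabs \<beta>))"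
  proof (intro exI conjI allI)
    show "(0::real) < max C 1" by simp
    fix x \<xi>
    have "norm (Dxxi \<alpha> \<beta> f (x, \<xi>)) \<le> C * \<Lambda> \<xi> powr (0 - \<rho> * real (mabs \<beta>))"
      using C[of "(x, \<xi>)"] unfolding Dxxi_eq by simp
    also have "\<dots> \<le> max C 1 * \<Lambda> \<xi> powr (0 - \<rho> * real (mabs \<beta>))"
      by (rule mult_right_mono) auto
    finally show "norm (Dxxi \<alpha> \<beta> f (x, \<xi>)) \<le> max C 1 * \<Lambda> \<xi> powr (0 - \<rho> * real (mabs \<beta>))" .
  qed
qed

lemma mpow_eq2: "complex_of_real (prod_list (map ((\<bullet>) z) (mdirs exi \<gamma>))) = complex_of_real (mpow (snd z) \<gamma>)"
  using mpow_eq[of "snd z" \<gamma> "fst z"] by simp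

lemma G_eq:
  fixes f :: "(real^'n::finite) \<times> (real^'n) \<Rightarrow> complex"
  assumes "smooth f" "\<forall>j. \<gamma> j \<le> 1"
  shows "(\<lambda>(x, \<xi>). complex_of_real (mpow \<xi> \<gamma>) * Dxxi (\<lambda>_. 0) \<gamma> f (x, \<xi>)) = Eit (mdirs exi \<gamma>) f"
proof -
  have b: "set (mdirs exi \<gamma>) \<subseteq> Basis" using set_mdirs[of exi \<gamma>] exi_basis by blast
  show ?thesis
    unfolding Eit_conv[OF assms(1) distinct_mdirs[OF inj_exi assms(2)] b] Dxxi_eq mdirs_zero
    apply (rule ext)
    subgoal for z by (cases z) (simp add: mpow_eq2 scaleR_conv_of_real)
    done
qed

theorem mainTheorem6:
  fixes \<Lambda> :: "real^'n \<Rightarrow> real" and \<mu> \<rho> :: real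
    and \<sigma> :: "(real^'n) \<times> (real^'n) \<Rightarrow> complex" and F :: "complex \<Rightarrow> complex"
  assumes "weight_fn \<Lambda> \<mu>"
    and "0 < \<rho>" and "\<rho> \<le> 1 / \<mu>"
    and "\<sigma> \<in> M_class 0 \<rho> \<Lambda>"
    and "smooth F"
  shows "(\<lambda>z. F (\<sigma> z)) \<in> M_class 0 \<rho> \<Lambda>"
proof -
  define W where "W = (\<lambda>z::(real^'n) \<times> (real^'n). \<Lambda> (snd z))"
  have pos: "\<forall>z. 0 < W z" using assms(1) unfolding weight_fn_def W_def by blast
  have Msig: "\<And>\<gamma>. \<forall>j. \<gamma> j \<le> 1 \<Longrightarrow>
      (\<lambda>(x, \<xi>). complex_of_real (mpow \<xi> \<gamma>) * Dxxi (\<lambda>_. 0) \<gamma> \<sigma> (x, \<xi>)) \<in> S_class 0 \<rho> \<Lambda>"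
    using assms(4) unfolding M_class_def by blast
  have "(\<lambda>(x, \<xi>). complex_of_real (mpow \<xi> (\<lambda>_. 0)) * Dxxi (\<lambda>_. 0) (\<lambda>_. 0) \<sigma> (x, \<xi>)) = \<sigma>"
    by (auto simp: mpow_def Dxxi_eq)
  then have sS: "\<sigma> \<in> S_class 0 \<rho> \<Lambda>" using Msig[of "\<lambda>_. 0"] by simp
  then have sm: "smooth \<sigma>" unfolding S_class_def by blast
  have sC: "Class W (cw \<rho>) Pc \<sigma>" unfolding W_def by (rule S_to_Class[OF sS])
  have FC: "Class W (cw \<rho>) Pc (\<lambda>z. F (\<sigma> z))" by (rule Class_comp[OF pos downcl_Pc assms(5) sC])
  have smF: "smooth (\<lambda>z. F (\<sigma> z))" by (rule Class_smooth[OF FC])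
  show ?thesis
    unfolding M_class_def
  proof (intro CollectI allI impI)
    fix \<gamma> :: "'n \<Rightarrow> nat" assume g: "\<forall>j. \<gamma> j \<le> 1"
    have K: "KK W (cw \<rho>) Pc (mdirs exi \<gamma>) \<sigma>"
      unfolding KK_def
    proof (intro conjI allI impI)
      show "set (mdirs exi \<gamma>) \<subseteq> Basis" using set_mdirs[of exi \<gamma>] exi_basis by blast
      fix us assume "subseq us (mdirs exi \<gamma>)"
      then obtain \<gamma>' where g': "\<forall>i. \<gamma>' i \<le> \<gamma> i" "us = mdirs exi \<gamma>'" using subseq_mdirs by blast
      have g'1: "\<forall>j. \<gamma>' j \<le> 1" using g g' by (meson order_trans)
      have "Class W (cw \<rho>) Pc (\<lambda>(x, \<xi>). complex_of_real (mpow \<xi> \<gamma>') * Dxxi (\<lambda>_. 0) \<gamma>' \<sigma> (x, \<xi>))"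
        unfolding W_def by (rule S_to_Class[OF Msig[OF g'1]])
      then show "Class W (cw \<rho>) Pc (Eit us \<sigma>)" unfolding G_eq[OF sm g'1] g'(2) .
    qed
    have "Class W (cw \<rho>) Pc (Eit (mdirs exi \<gamma>) (\<lambda>z. F (\<sigma> z)))"
      by (rule K_comp[OF pos downcl_Pc assms(5) K])
    then have "Class (\<lambda>z. \<Lambda> (snd z)) (cw \<rho>) Pc
        (\<lambda>(x, \<xi>). complex_of_real (mpow \<xi> \<gamma>) * Dxxi (\<lambda>_. 0) \<gamma> (\<lambda>z. F (\<sigma> z)) (x, \<xi>))"
      unfolding G_eq[OF smF g] W_def .
    then show "(\<lambda>(x, \<xi>). complex_of_real (mpow \<xi> \<gamma>) * Dxxi (\<lambda>_. 0) \<gamma> (\<lambda>z. F (\<sigma> z)) (x, \<xi>)) \<in> S_class 0 \<rho> \<Lambda>"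
      by (rule Class_to_S)
  qed
qed

end
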